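(* Let $p$ and $r$ be states such that $\beta(p)$ tightly thermomajorizes $\beta(r)$. Then there exist a biplanar extremal thermal process $T\in TP(d)$ with $Tp=r$, a $\beta$-order $\lambda$ of $p$ and a $\beta$-order $\mu$ of $r$ such that the drawing of $G(T)$ with left ordering $\lambda$ and right ordering $\mu$ is plain (i.e. one may take $\pi_{in}(T)=\lambda$, $\pi_{out}(T)=\mu$). If moreover the ratios $p_i/g_i$ are pairwise distinct, then $T$ is the only element of $TP(d)$ satisfying $Tp=r$.
   Context: Fix $d\ge 2$, $\beta\in(0,\infty)$ and pairwise distinct reals $E_0=0,E_1,\dots,E_{d-1}$. Put $q_{m,n}=e^{-\beta(E_m-E_n)}$, $Z=\sum_j q_{j,0}$, $g_i=q_{i,0}/Z$. A state is a probability vector in $\mathbb{R}^d$. $TP(d)$ is the set of $d\times d$ real matrices with non-negative entries, columns summing to $1$, and $Tg=g$; an extremal thermal process is an extreme point of the convex set $TP(d)$. $\beta$-order and curve: for a state $p$, a permutation $\pi$ of $\{0,\dots,d-1\}$ with $p_{\pi(0)}/g_{\pi(0)}\ge\dots\ge p_{\pi(d-1)}/g_{\pi(d-1)}$ gives the $\beta$-order $(\pi(0),\dots,\pi(d-1))$; with $x_k=\sum_{i\le k}g_{\pi(i)}$, $y_k=\sum_{i\le k}p_{\pi(i)}$, the thermomajorization curve $\beta(p)$ is the graph of the concave piecewise-linear function on $[0,1]$ through $(0,0),(x_0,y_0),\dots,(x_{d-1},y_{d-1})=(1,1)$; its elbows are $(x_k,y_k)$, $k=0,\dots,d-2$. $\beta(p)$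 tightly thermomajorizes $\beta(r)$ if every elbow of $\beta(r)$ lies on $\beta(p)$. Graphs: for $T\in TP(d)$, $G(T)$ is the bipartite graph with left vertices $L_0,\dots,L_{d-1}$ (columns), right vertices $R_0,\dots,R_{d-1}$ (rows), and an edge $\{L_j,R_i\}$ iff $T_{ij}>0$ (this is the support graph of the transportation matrix $T\,\mathrm{diag}(q_{0,0},\dots,q_{d-1,0})$). Given orderings $\lambda=(\lambda_0,\dots,\lambda_{d-1})$ and $\mu=(\mu_0,\dots,\mu_{d-1})$ (permutations of $\{0,\dots,d-1\}$), place $L_{\lambda_a}$ at height $a$ on one vertical line and $R_{\mu_b}$ at height $b$ on a parallel line and draw edges as straight segments; the drawing is plain if there are no two edges $\{L_{\lambda_a},R_{\mu_b}\}$, $\{L_{\lambda_{a'}},R_{\mu_{b'}}\}$ with $a<a'$ and $b>b'$. An extremal thermal process $T$ is biplanar if some pair $(\lambda,\mu)$ gives a plain drawing; such $\lambda,\mu$ are called orders $\pi_{in}(T),\pi_{out}(T)$ of $T$. *)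

theory Defs
  imports Main "HOL.Transcendental"
begin

text \<open>Indices are 0..d-1 (naturals below d). Vectors are nat => real, matrices
nat => nat => real (T i j = entry in row i, column j).\<close>

definition gibbs :: "nat \<Rightarrow> real \<Rightarrow> (nat \<Rightarrow> real) \<Rightarrow> nat \<Rightarrow> real" where
  "gibbs d \<beta> E i = exp (- \<beta> * E i) / (\<Sum>j<d. exp (- \<beta> * E j))"

definition is_state :: "nat \<Rightarrow> (nat \<Rightarrow> real) \<Rightarrow> bool" where
  "is_state d p \<longleftrightarrow> (\<forall>i<d. 0 \<le> p i) \<and> (\<Sum>i<d. p i) = 1"

definition TP :: "nat \<Rightarrow> (nat \<Rightarrow> real) \<Rightarrow> (nat \<Rightarrow> nat \<Rightarrow> real) set" where
  "TP d g = {T. (\<forall>i j. (i \<ge> d \<or> j \<ge> d) \<longrightarrow> T i j = 0)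
               \<and> (\<forall>i<d. \<forall>j<d. 0 \<le> T i j)
               \<and> (\<forall>j<d. (\<Sum>i<d. T i j) = 1)
               \<and> (\<forall>i<d. (\<Sum>j<d. T i j * g j) = g i)}"

definition extremal_TP :: "nat \<Rightarrow> (nat \<Rightarrow> real) \<Rightarrow> (nat \<Rightarrow> nat \<Rightarrow> real) \<Rightarrow> bool" where
  "extremal_TP d g T \<longleftrightarrow> T \<in> TP d g \<and>
     \<not> (\<exists>A\<in>TP d g. \<exists>B\<in>TP d g. A \<noteq> B \<and>
          (\<exists>t::real. 0 < t \<and> t < 1 \<and> T = (\<lambda>i j. t * A i j + (1 - t) * B i j)))"

definition mat_apply :: "nat \<Rightarrow> (nat \<Rightarrow> nat \<Rightarrow> real) \<Rightarrow> (nat \<Rightarrow> real) \<Rightarrow> nat \<Rightarrow> real" where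
  "mat_apply d T p i = (\<Sum>j<d. T i j * p j)"

definition maps_to :: "nat \<Rightarrow> (nat \<Rightarrow> nat \<Rightarrow> real) \<Rightarrow> (nat \<Rightarrow> real) \<Rightarrow> (nat \<Rightarrow> real) \<Rightarrow> bool" where
  "maps_to d T p r \<longleftrightarrow> (\<forall>i<d. mat_apply d T p i = r i)"

definition beta_order :: "nat \<Rightarrow> (nat \<Rightarrow> real) \<Rightarrow> (nat \<Rightarrow> real) \<Rightarrow> (nat \<Rightarrow> nat) \<Rightarrow> bool" where
  "beta_order d g p \<pi> \<longleftrightarrow> bij_betw \<pi> {..<d} {..<d} \<and>
     (\<forall>k. k + 1 < d \<longrightarrow> p (\<pi> (k + 1)) / g (\<pi> (k + 1)) \<le> p (\<pi> k) / g (\<pi> k))"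

text \<open>Vertices of the curve w.r.t. an order: vertex j (0 \<le> j \<le> d) is the pair of partial sums
over the first j entries; vertex 0 = (0,0), vertex d = (1,1); vertex j for 1 \<le> j \<le> d-1 is the
elbow (x_{j-1}, y_{j-1}) of the paper.\<close>
definition curve_vertex :: "(nat \<Rightarrow> real) \<Rightarrow> (nat \<Rightarrow> real) \<Rightarrow> (nat \<Rightarrow> nat) \<Rightarrow> nat \<Rightarrow> real \<times> real" where
  "curve_vertex g p \<pi> j = ((\<Sum>i<j. g (\<pi> i)), (\<Sum>i<j. p (\<pi> i)))"

text \<open>A point lies on the thermomajorization curve beta(p): it lies on one of the segments of the
piecewise linear graph through the vertices of a beta-order of p (the curve does not depend on
the choice of beta-order).\<close>
definition on_curve :: "nat \<Rightarrow> (nat \<Rightarrow> real) \<Rightarrow> (nat \<Rightarrow> real) \<Rightarrow> real \<times> real \<Rightarrow> bool" where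
  "on_curve d g p pt \<longleftrightarrow> (\<exists>\<pi>. beta_order d g p \<pi> \<and>
     (\<exists>j<d. \<exists>t::real. 0 \<le> t \<and> t \<le> 1 \<and>
        fst pt = (1 - t) * fst (curve_vertex g p \<pi> j) + t * fst (curve_vertex g p \<pi> (Suc j)) \<and>
        snd pt = (1 - t) * snd (curve_vertex g p \<pi> j) + t * snd (curve_vertex g p \<pi> (Suc j))))"

definition tightly_thermomaj :: "nat \<Rightarrow> (nat \<Rightarrow> real) \<Rightarrow> (nat \<Rightarrow> real) \<Rightarrow> (nat \<Rightarrow> real) \<Rightarrow> bool" where
  "tightly_thermomaj d g p r \<longleftrightarrow> (\<forall>\<mu>. beta_order d g r \<mu> \<longrightarrow>
     (\<forall>j. 1 \<le> j \<and> j < d \<longrightarrow> on_curve d g p (curve_vertex g r \<mu> j)))"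

text \<open>Plain drawing of G(T): L_{lambda a} at height a, R_{mu b} at height b; edge {L_j,R_i} iff T i j > 0.\<close>
definition plain_drawing :: "nat \<Rightarrow> (nat \<Rightarrow> nat \<Rightarrow> real) \<Rightarrow> (nat \<Rightarrow> nat) \<Rightarrow> (nat \<Rightarrow> nat) \<Rightarrow> bool" where
  "plain_drawing d T lam \<mu> \<longleftrightarrow> \<not> (\<exists>a a' b b'. a < d \<and> a' < d \<and> b < d \<and> b' < d \<and> a < a' \<and> b' < b \<and>
      T (\<mu> b) (lam a) > 0 \<and> T (\<mu> b') (lam a') > 0)"

definition biplanar :: "nat \<Rightarrow> (nat \<Rightarrow> real) \<Rightarrow> (nat \<Rightarrow> nat \<Rightarrow> real) \<Rightarrow> bool" where
  "biplanar d g T \<longleftrightarrow> extremal_TP d g T \<and>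
     (\<exists>lam \<mu>. bij_betw lam {..<d} {..<d} \<and> bij_betw \<mu> {..<d} {..<d} \<and> plain_drawing d T lam \<mu>)"

end

theory Submission
  imports Defs
begin


definition ov :: "real \<Rightarrow> real \<Rightarrow> real \<Rightarrow> real \<Rightarrow> real" where
  "ov u v a b = max 0 (min v b - max u a)"

lemma ov_nonneg: "0 \<le> ov u v a b" by (simp add: ov_def)
lemma ov_sym: "ov u v a b = ov a b u v" by (simp add: ov_def min.commute max.commute)
lemma ov_add1: "u \<le> v \<Longrightarrow> v \<le> w \<Longrightarrow> ov u w a b = ov u v a b + ov v w a b"
  by (simp add: ov_def max_def min_def)
lemma ov_add2: "a \<le> m \<Longrightarrow> m \<le> b \<Longrightarrow> ov u v a b = ov u v a m + ov u v m b"
  using ov_add1[of a m b u v] by (simp add: ov_sym)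
lemma ov_full: "a \<le> u \<Longrightarrow> u \<le> v \<Longrightarrow> v \<le> b \<Longrightarrow> ov u v a b = v - u"
  by (simp add: ov_def max_def min_def)
lemma ov_le: "a \<le> b \<Longrightarrow> ov u v a b \<le> b - a"
  by (simp add: ov_def max_def min_def)
lemma ov_pos: "0 < ov u v a b \<Longrightarrow> u < b \<and> a < v"
  by (simp add: ov_def max_def min_def split: if_splits)

lemma ov_sum:
  assumes "\<And>a b. a \<le> b \<Longrightarrow> X a \<le> X b"
  shows "(\<Sum>a<n. ov u v (X a) (X (Suc a))) = ov u v (X 0) (X n)"
proof (induction n)
  case 0 then show ?case by (simp add: ov_def max_def min_def)
next
  case (Suc n)
  then show ?case using ov_add2[of "X 0" "X n" "X (Suc n)" u v] assms[of 0 n] assms[of n "Suc n"]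
    by simp
qed

lemma chain_mono:
  fixes b :: nat
  assumes "\<And>k. k+1<d \<Longrightarrow> f (\<pi> (k+1)) \<le> (f (\<pi> k)::real)"
  shows "a \<le> b \<Longrightarrow> b < d \<Longrightarrow> f (\<pi> b) \<le> f (\<pi> a)"
proof (induction b)
  case 0 then show ?case by simp
next
  case (Suc b)
  show ?case
  proof (cases "a = Suc b")
    case False
    then have "f (\<pi> b) \<le> f (\<pi> a)" using Suc by simp
    moreover have "f (\<pi> (Suc b)) \<le> f (\<pi> b)" using assms[of b] Suc by simp
    ultimately show ?thesis by linarith
  qed simp
qed



lemma knap_core:
  fixes g p s \<sigma> :: "nat \<Rightarrow> real" and \<pi> :: "nat \<Rightarrow> nat"
  assumes bij: "bij_betw \<pi> {..<d} {..<d}"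
   and mono: "\<And>k. k+1<d \<Longrightarrow> p (\<pi> (k+1)) / g (\<pi> (k+1)) \<le> p (\<pi> k) / g (\<pi> k)"
   and gpos: "\<And>i. i<d \<Longrightarrow> 0 < g i"
   and pnn: "\<And>i. i<d \<Longrightarrow> 0 \<le> p i"
   and s01: "\<And>i. i<d \<Longrightarrow> 0 \<le> s i \<and> s i \<le> 1"
   and sg01: "\<And>i. i<d \<Longrightarrow> 0 \<le> \<sigma> i \<and> \<sigma> i \<le> 1"
   and greedy: "\<And>a a'. a < a' \<Longrightarrow> a' < d \<Longrightarrow> 0 < \<sigma> (\<pi> a') \<Longrightarrow> \<sigma> (\<pi> a) = 1"
   and eq: "(\<Sum>i<d. s i * g i) = (\<Sum>i<d. \<sigma> i * g i)"
  shows "(\<Sum>i<d. s i * p i) \<le> (\<Sum>i<d. \<sigma> i * p i) \<and>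
         (inj_on (\<lambda>i. p i / g i) {..<d} \<longrightarrow> (\<Sum>i<d. s i * p i) = (\<Sum>i<d. \<sigma> i * p i)
            \<longrightarrow> (\<forall>i<d. s i = \<sigma> i))"
proof -
  define \<rho> where "\<rho> i = p i / g i" for i
  have pg: "p i = g i * \<rho> i" if "i<d" for i using gpos[OF that] by (simp add: \<rho>_def)
  have chain: "\<rho> (\<pi> b) \<le> \<rho> (\<pi> a)" if "a \<le> b" "b < d" for a b
    using chain_mono[of d "\<rho>" \<pi> a b] mono that unfolding \<rho>_def by blast
  have inv: "\<exists>a<d. i = \<pi> a" if "i < d" for i
    using bij that unfolding bij_betw_def by auto
  obtain j where j: "j \<le> d" "\<And>a. a<d \<Longrightarrow> a < j \<Longrightarrow> \<sigma> (\<pi> a) = 1"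
       "\<And>a. a<d \<Longrightarrow> j < a \<Longrightarrow> \<sigma> (\<pi> a) = 0"
  proof (cases "\<forall>a<d. \<sigma> (\<pi> a) = 1")
    case True then show ?thesis using that[of d] by auto
  next
    case False
    define j where "j = (LEAST a. a<d \<and> \<sigma> (\<pi> a) \<noteq> 1)"
    have jP: "j<d \<and> \<sigma> (\<pi> j) \<noteq> 1" unfolding j_def using False by (metis (mono_tags, lifting) LeastI)
    have lt: "\<sigma> (\<pi> a) = 1" if "a<d" "a<j" for a
      using not_less_Least[of a "\<lambda>a. a<d \<and> \<sigma> (\<pi> a) \<noteq> 1"] that unfolding j_def by blast
    have gt: "\<sigma> (\<pi> a) = 0" if "a<d" "j<a" for a
    proof -
      have "\<not> 0 < \<sigma> (\<pi> a)" using greedy[of j a] that jP by blast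
      moreover have "\<pi> a < d" using bij that unfolding bij_betw_def by auto
      ultimately show ?thesis using sg01[of "\<pi> a"] by linarith
    qed
    show ?thesis using that[of j] jP lt gt by auto
  qed
  define c where "c = (if j < d then \<rho> (\<pi> j) else 0)"
  define t where "t i = (s i - \<sigma> i) * g i * (\<rho> i - c)" for i
  have tle: "t i \<le> 0" if hi: "i<d" for i
  proof -
    obtain a where a: "a<d" "i = \<pi> a" using inv[OF hi] by blast
    have gi: "0 < g i" using gpos hi by auto
    consider "a < j" | "a = j" | "j < a" by linarith
    then show ?thesis
    proof cases
      case 1
      have "\<sigma> i = 1" using j(2)[OF a(1) 1] a by simp
      moreover have "c \<le> \<rho> i"
      proof (cases "j<d")
        case True then show ?thesis using chain[of a j] 1 a by (simp add: c_def)
      next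
        case False then show ?thesis using pnn[OF hi] gi by (simp add: c_def \<rho>_def)
      qed
      ultimately show ?thesis unfolding t_def using s01[OF hi] gi
        by (simp add: mult_nonpos_nonneg)
    next
      case 2 then show ?thesis using a by (simp add: t_def c_def)
    next
      case 3
      have "\<sigma> i = 0" using j(3)[OF a(1) 3] a by simp
      moreover have "\<rho> i \<le> c" using chain[of j a] 3 a by (simp add: c_def)
      ultimately show ?thesis unfolding t_def using s01[OF hi] gi
        by (simp add: mult_nonneg_nonpos)
    qed
  qed
  have dsum: "(\<Sum>i<d. (s i - \<sigma> i) * g i) = 0"
    using eq by (simp add: sum_subtractf left_diff_distrib)
  have key: "(\<Sum>i<d. s i * p i) - (\<Sum>i<d. \<sigma> i * p i) = (\<Sum>i<d. t i)"
  proof -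
    have "(\<Sum>i<d. s i * p i) - (\<Sum>i<d. \<sigma> i * p i) = (\<Sum>i<d. (s i - \<sigma> i) * g i * \<rho> i)"
      by (simp add: sum_subtractf[symmetric] pg algebra_simps)
    also have "\<dots> = (\<Sum>i<d. t i) + c * (\<Sum>i<d. (s i - \<sigma> i) * g i)"
      by (simp add: t_def sum_distrib_left sum.distrib[symmetric] algebra_simps)
    finally show ?thesis using dsum by simp
  qed
  have part1: "(\<Sum>i<d. s i * p i) \<le> (\<Sum>i<d. \<sigma> i * p i)"
    using key sum_nonpos[of "{..<d}" t] tle by fastforce
  have part2: "\<forall>i<d. s i = \<sigma> i"
    if inj: "inj_on (\<lambda>i. p i / g i) {..<d}" and veq: "(\<Sum>i<d. s i * p i) = (\<Sum>i<d. \<sigma> i * p i)"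
  proof (cases "j < d")
    case False
    then have s1: "\<sigma> i = 1" if "i<d" for i using inv[OF that] j(2) j(1) by auto
    have "\<forall>i\<in>{..<d}. (\<sigma> i - s i) * g i = 0"
      apply (rule sum_nonneg_eq_0_iff[THEN iffD1])
      using s1 s01 gpos dsum by (auto simp: sum_subtractf left_diff_distrib)
    then show ?thesis using gpos by (metis lessThan_iff less_irrefl mult_eq_0_iff right_minus_eq)
  next
    case True
    have t0: "\<forall>i\<in>{..<d}. - t i = 0"
      apply (rule sum_nonneg_eq_0_iff[THEN iffD1])
      using tle key veq by (auto simp: sum_negf)
    have oth: "s i = \<sigma> i" if "i<d" "i \<noteq> \<pi> j" for i
    proof -
      have "\<pi> j < d" using bij True unfolding bij_betw_def by auto
      then have "\<rho> i \<noteq> c" using inj that True unfolding c_def \<rho>_def inj_on_def by auto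
      moreover have "t i = 0" using t0 that by auto
      ultimately show ?thesis using gpos[OF that(1)] by (simp add: t_def)
    qed
    have pj: "\<pi> j < d" using bij True unfolding bij_betw_def by auto
    have "(\<Sum>i<d. (s i - \<sigma> i) * g i) = (s (\<pi> j) - \<sigma> (\<pi> j)) * g (\<pi> j) + (\<Sum>i\<in>{..<d} - {\<pi> j}. (s i - \<sigma> i) * g i)"
      using pj by (simp add: sum.remove)
    also have "(\<Sum>i\<in>{..<d} - {\<pi> j}. (s i - \<sigma> i) * g i) = 0"
      using oth by (intro sum.neutral) auto
    finally have "s (\<pi> j) = \<sigma> (\<pi> j)" using dsum gpos[OF pj] by simp
    then show ?thesis using oth by metis
  qed
  show ?thesis using part1 part2 by blast
qed



lemma split_sum:
  fixes f :: "nat \<Rightarrow> real"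
  shows "j < d \<Longrightarrow> (\<Sum>a<d. (if a<j then f a else if a=j then t * f a else 0)) = (\<Sum>a<j. f a) + t * f j"
proof (induction d)
  case 0 then show ?case by simp
next
  case (Suc d)
  show ?case
  proof (cases "j < d")
    case True then show ?thesis using Suc by simp
  next
    case False
    then have jd: "j = d" using Suc by simp
    have "(\<Sum>a<d. (if a<j then f a else if a=j then t * f a else 0)) = (\<Sum>a<j. f a)"
      using jd by (intro sum.cong) auto
    then show ?thesis using jd by simp
  qed
qed

lemma reidx:
  assumes "bij_betw \<pi> {..<d} {..<d}"
  shows "(\<Sum>i<d. h i) = (\<Sum>a<d. h (\<pi> a))"
  using sum.reindex_bij_betw[OF assms, of h] by simp

lemma bij_inv1: "bij_betw \<pi> {..<d} {..<d} \<Longrightarrow> a < d \<Longrightarrow> inv_into {..<d} \<pi> (\<pi> a) = a"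
  by (simp add: bij_betw_def inv_into_f_f)
lemma bij_inv2: "bij_betw \<pi> {..<d} {..<d} \<Longrightarrow> i < d \<Longrightarrow> \<pi> (inv_into {..<d} \<pi> i) = i \<and> inv_into {..<d} \<pi> i < d"
  by (simp add: bij_betw_def f_inv_into_f inv_into_into[of i \<pi> "{..<d}", simplified])
lemma bij_lt: "bij_betw \<pi> {..<d} {..<d} \<Longrightarrow> a < d \<Longrightarrow> \<pi> a < d"
  by (auto simp: bij_betw_def)

definition sig :: "nat \<Rightarrow> (nat \<Rightarrow> nat) \<Rightarrow> nat \<Rightarrow> real \<Rightarrow> nat \<Rightarrow> real" where
  "sig d \<pi> j t i = (let a = inv_into {..<d} \<pi> i in if a<j then 1 else if a = j then t else 0)"

lemma sig_at: "bij_betw \<pi> {..<d} {..<d} \<Longrightarrow> a < d \<Longrightarrow>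
   sig d \<pi> j t (\<pi> a) = (if a<j then 1 else if a=j then t else 0)"
  by (simp add: sig_def bij_inv1)

lemma sig_01: "bij_betw \<pi> {..<d} {..<d} \<Longrightarrow> 0 \<le> t \<Longrightarrow> t \<le> 1 \<Longrightarrow> 0 \<le> sig d \<pi> j t i \<and> sig d \<pi> j t i \<le> 1"
  by (simp add: sig_def Let_def)

lemma sig_greedy: "bij_betw \<pi> {..<d} {..<d} \<Longrightarrow> a < a' \<Longrightarrow> a' < d \<Longrightarrow> 0 < sig d \<pi> j t (\<pi> a') \<Longrightarrow> sig d \<pi> j t (\<pi> a) = 1"
  by (simp add: sig_at split: if_splits)

lemma sig_sum: "bij_betw \<pi> {..<d} {..<d} \<Longrightarrow> j < d \<Longrightarrow>
   (\<Sum>i<d. sig d \<pi> j t i * h i) = (\<Sum>a<j. h (\<pi> a)) + t * h (\<pi> j)"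
proof -
  assume b: "bij_betw \<pi> {..<d} {..<d}" and j: "j<d"
  have "(\<Sum>i<d. sig d \<pi> j t i * h i) = (\<Sum>a<d. sig d \<pi> j t (\<pi> a) * h (\<pi> a))"
    by (rule reidx[OF b])
  also have "\<dots> = (\<Sum>a<d. (if a<j then h (\<pi> a) else if a=j then t * h (\<pi> a) else 0))"
    using b by (intro sum.cong) (auto simp: sig_at)
  also have "\<dots> = (\<Sum>a<j. h (\<pi> a)) + t * h (\<pi> j)"
    using split_sum[OF j, of "\<lambda>a. h (\<pi> a)" t] by simp
  finally show ?thesis .
qed



definition Xs :: "(nat \<Rightarrow> real) \<Rightarrow> (nat \<Rightarrow> nat) \<Rightarrow> nat \<Rightarrow> real" where
  "Xs g \<pi> a = (\<Sum>c<a. g (\<pi> c))"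

definition Fc :: "nat \<Rightarrow> (nat \<Rightarrow> real) \<Rightarrow> (nat \<Rightarrow> real) \<Rightarrow> (nat \<Rightarrow> nat) \<Rightarrow> real \<Rightarrow> real" where
  "Fc d g p lam x = (\<Sum>a<d. ov 0 x (Xs g lam a) (Xs g lam (Suc a)) * (p (lam a) / g (lam a)))"

definition sl :: "nat \<Rightarrow> (nat \<Rightarrow> real) \<Rightarrow> (nat \<Rightarrow> nat) \<Rightarrow> real \<Rightarrow> nat \<Rightarrow> real" where
  "sl d g lam x i = ov 0 x (Xs g lam (inv_into {..<d} lam i)) (Xs g lam (Suc (inv_into {..<d} lam i))) / g i"

lemma Xs_mono: "(\<And>i. 0 < g i) \<Longrightarrow> a \<le> b \<Longrightarrow> Xs g \<pi> a \<le> Xs g \<pi> b"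
  unfolding Xs_def by (rule sum_mono2) (auto intro: less_imp_le)

lemma Xs_0: "Xs g \<pi> 0 = 0" by (simp add: Xs_def)
lemma Xs_nn: "(\<And>i. 0 < g i) \<Longrightarrow> 0 \<le> Xs g \<pi> a" unfolding Xs_def by (auto intro: sum_nonneg less_imp_le)
lemma Xs_Suc: "Xs g \<pi> (Suc a) = Xs g \<pi> a + g (\<pi> a)" by (simp add: Xs_def)
lemma Xs_d: "bij_betw \<pi> {..<d} {..<d} \<Longrightarrow> (\<Sum>i<d. g i) = 1 \<Longrightarrow> Xs g \<pi> d = 1"
  unfolding Xs_def using reidx[of \<pi> d g] by simp
lemma Xs_le1: "(\<And>i. 0 < g i) \<Longrightarrow> bij_betw \<pi> {..<d} {..<d} \<Longrightarrow> (\<Sum>i<d. g i) = 1 \<Longrightarrow> a \<le> d \<Longrightarrow> Xs g \<pi> a \<le> 1"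
  using Xs_mono[of g a d \<pi>] Xs_d[of \<pi> d g] by simp

lemma sl_at: "bij_betw lam {..<d} {..<d} \<Longrightarrow> a < d \<Longrightarrow>
   sl d g lam x (lam a) = ov 0 x (Xs g lam a) (Xs g lam (Suc a)) / g (lam a)"
  by (simp add: sl_def bij_inv1)

lemma sl_01: "(\<And>i. 0 < g i) \<Longrightarrow> bij_betw lam {..<d} {..<d} \<Longrightarrow> i < d \<Longrightarrow> 0 \<le> sl d g lam x i \<and> sl d g lam x i \<le> 1"
proof -
  assume gp: "\<And>i. 0 < g i" and b: "bij_betw lam {..<d} {..<d}" and i: "i < d"
  define a where "a = inv_into {..<d} lam i"
  have li: "lam a = i" using bij_inv2[OF b i] a_def by simp
  have "ov 0 x (Xs g lam a) (Xs g lam (Suc a)) \<le> g i"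
    using ov_le[of "Xs g lam a" "Xs g lam (Suc a)" 0 x] less_imp_le[OF gp[of i]] li
    by (simp add: Xs_Suc)
  then show ?thesis using gp[of i] ov_nonneg unfolding sl_def a_def[symmetric]
    by (simp add: divide_le_eq_1)
qed

lemma sl_greedy:
  assumes gp: "\<And>i. 0 < g i" and b: "bij_betw lam {..<d} {..<d}"
  shows "a < a' \<Longrightarrow> a' < d \<Longrightarrow> 0 < sl d g lam x (lam a') \<Longrightarrow> sl d g lam x (lam a) = 1"
proof -
  assume aa: "a < a'" "a' < d" "0 < sl d g lam x (lam a')"
  have "0 < ov 0 x (Xs g lam a') (Xs g lam (Suc a'))"
    using aa sl_at[OF b aa(2)] gp[of "lam a'"] by (simp add: zero_less_divide_iff)
  then have "Xs g lam a' < x" using ov_pos by blast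
  moreover have "Xs g lam (Suc a) \<le> Xs g lam a'" using Xs_mono[OF gp] aa by simp
  ultimately have "ov 0 x (Xs g lam a) (Xs g lam (Suc a)) = g (lam a)"
    using ov_full[of 0 "Xs g lam a" "Xs g lam (Suc a)" x] Xs_nn[of g lam a, OF gp] less_imp_le[OF gp[of "lam a"]]
    by (simp add: ov_sym Xs_Suc)
  then show ?thesis using sl_at[OF b, of a] aa gp[of "lam a"] by simp
qed

lemma sl_sum_g:
  assumes gp: "\<And>i. 0 < g i" and b: "bij_betw lam {..<d} {..<d}" and gs: "(\<Sum>i<d. g i) = 1"
    and x: "0 \<le> x" "x \<le> 1"
  shows "(\<Sum>i<d. sl d g lam x i * g i) = x"
proof -
  have "(\<Sum>i<d. sl d g lam x i * g i) = (\<Sum>a<d. sl d g lam x (lam a) * g (lam a))" by (rule reidx[OF b])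
  also have "\<dots> = (\<Sum>a<d. ov 0 x (Xs g lam a) (Xs g lam (Suc a)))"
    using gp by (intro sum.cong) (auto simp: sl_at[OF b] less_imp_neq[symmetric])
  also have "\<dots> = ov 0 x (Xs g lam 0) (Xs g lam d)" by (rule ov_sum) (rule Xs_mono[OF gp])
  also have "\<dots> = x" using Xs_d[OF b gs] x by (simp add: Xs_0 ov_full)
  finally show ?thesis .
qed

lemma sl_sum_p:
  assumes gp: "\<And>i. 0 < g i" and b: "bij_betw lam {..<d} {..<d}"
  shows "(\<Sum>i<d. sl d g lam x i * p i) = Fc d g p lam x"
proof -
  have "(\<Sum>i<d. sl d g lam x i * p i) = (\<Sum>a<d. sl d g lam x (lam a) * p (lam a))" by (rule reidx[OF b])
  also have "\<dots> = Fc d g p lam x"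
    unfolding Fc_def by (intro sum.cong) (auto simp: sl_at[OF b])
  finally show ?thesis .
qed



lemma oc_unfold:
  assumes "on_curve d g p (x, y)"
  shows "\<exists>\<pi> j t. beta_order d g p \<pi> \<and> j < d \<and> 0 \<le> t \<and> t \<le> 1 \<and>
     x = (\<Sum>i<d. sig d \<pi> j t i * g i) \<and> y = (\<Sum>i<d. sig d \<pi> j t i * p i)"
proof -
  obtain \<pi> j t where o: "beta_order d g p \<pi>" "j<d" "0 \<le> t" "t \<le> 1"
    "x = (1 - t) * fst (curve_vertex g p \<pi> j) + t * fst (curve_vertex g p \<pi> (Suc j))"
    "y = (1 - t) * snd (curve_vertex g p \<pi> j) + t * snd (curve_vertex g p \<pi> (Suc j))"
    using assms unfolding on_curve_def by auto
  have b: "bij_betw \<pi> {..<d} {..<d}" using o(1) unfolding beta_order_def by simp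
  have "x = (\<Sum>i<d. sig d \<pi> j t i * g i)"
    using o(5) sig_sum[OF b o(2), of t g] by (simp add: curve_vertex_def algebra_simps)
  moreover have "y = (\<Sum>i<d. sig d \<pi> j t i * p i)"
    using o(6) sig_sum[OF b o(2), of t p] by (simp add: curve_vertex_def algebra_simps)
  ultimately show ?thesis using o b by blast
qed

lemma curve_eq:
  assumes gp: "\<And>i. 0 < g i" and gs: "(\<Sum>i<d. g i) = 1" and pnn: "\<And>i. i<d \<Longrightarrow> 0 \<le> p i"
    and bo: "beta_order d g p lam" and oc: "on_curve d g p (x, y)"
  shows "Fc d g p lam x = y"
proof -
  obtain \<pi> j t where o: "beta_order d g p \<pi>" "j < d" "0 \<le> t" "t \<le> 1"
     "x = (\<Sum>i<d. sig d \<pi> j t i * g i)" "y = (\<Sum>i<d. sig d \<pi> j t i * p i)"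
    using oc_unfold[OF oc] by blast
  have bp: "bij_betw \<pi> {..<d} {..<d}" using o(1) unfolding beta_order_def by simp
  have bl: "bij_betw lam {..<d} {..<d}" using bo unfolding beta_order_def by simp
  have s01: "0 \<le> sig d \<pi> j t i \<and> sig d \<pi> j t i \<le> 1" for i using sig_01[OF bp o(3,4)] by simp
  have x0: "0 \<le> x" unfolding o(5) using s01 gp by (intro sum_nonneg mult_nonneg_nonneg) (auto intro: less_imp_le)
  have "x \<le> (\<Sum>i<d. 1 * g i)" unfolding o(5) using s01 gp
    by (intro sum_mono mult_right_mono) (auto intro: less_imp_le)
  then have x1: "x \<le> 1" using gs by simp
  have l01: "\<And>i. i<d \<Longrightarrow> 0 \<le> sl d g lam x i \<and> sl d g lam x i \<le> 1" using sl_01[where g=g, OF gp bl] by blast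
  have lg: "(\<Sum>i<d. sl d g lam x i * g i) = x" using sl_sum_g[where g=g, OF gp bl gs x0 x1] .
  have lp: "(\<Sum>i<d. sl d g lam x i * p i) = Fc d g p lam x" using sl_sum_p[where g=g, OF gp bl] .
  have mp: "\<And>k. k+1<d \<Longrightarrow> p (\<pi> (k+1)) / g (\<pi> (k+1)) \<le> p (\<pi> k) / g (\<pi> k)"
    using o(1) unfolding beta_order_def by blast
  have ml: "\<And>k. k+1<d \<Longrightarrow> p (lam (k+1)) / g (lam (k+1)) \<le> p (lam k) / g (lam k)"
    using bo unfolding beta_order_def by blast
  have gp': "\<And>i. i<d \<Longrightarrow> 0 < g i" using gp by blast
  have s01': "\<And>i. i<d \<Longrightarrow> 0 \<le> sig d \<pi> j t i \<and> sig d \<pi> j t i \<le> 1" using s01 by blast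
  have gr1: "\<And>a a'. a < a' \<Longrightarrow> a' < d \<Longrightarrow> 0 < sig d \<pi> j t (\<pi> a') \<Longrightarrow> sig d \<pi> j t (\<pi> a) = 1"
    using sig_greedy[OF bp] by blast
  have gr2: "\<And>a a'. a < a' \<Longrightarrow> a' < d \<Longrightarrow> 0 < sl d g lam x (lam a') \<Longrightarrow> sl d g lam x (lam a) = 1"
    using sl_greedy[where g=g, OF gp bl] by blast
  have eq1: "(\<Sum>i<d. sl d g lam x i * g i) = (\<Sum>i<d. sig d \<pi> j t i * g i)" using lg o(5) by simp
  have "Fc d g p lam x \<le> y"
    using conjunct1[OF knap_core[OF bp mp gp' pnn l01 s01' gr1 eq1]] lp o(6) by simp
  moreover have "y \<le> Fc d g p lam x"
    using conjunct1[OF knap_core[OF bl ml gp' pnn s01' l01 gr2 eq1[symmetric]]] lp o(6) by simp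
  ultimately show ?thesis by linarith
qed


lemma curve_unique:
  assumes gp: "\<And>i. 0 < g i" and pnn: "\<And>i. i<d \<Longrightarrow> 0 \<le> p i"
    and oc: "on_curve d g p (x, y)" and inj: "inj_on (\<lambda>i. p i / g i) {..<d}"
    and s: "\<And>i. i<d \<Longrightarrow> 0 \<le> s i \<and> s i \<le> 1" "(\<Sum>i<d. s i * g i) = x" "(\<Sum>i<d. s i * p i) = y"
    and s': "\<And>i. i<d \<Longrightarrow> 0 \<le> s' i \<and> s' i \<le> 1" "(\<Sum>i<d. s' i * g i) = x" "(\<Sum>i<d. s' i * p i) = y"
  shows "\<forall>i<d. s i = s' i"
proof -
  obtain \<pi> j t where o: "beta_order d g p \<pi>" "j < d" "0 \<le> t" "t \<le> 1"
     "x = (\<Sum>i<d. sig d \<pi> j t i * g i)" "y = (\<Sum>i<d. sig d \<pi> j t i * p i)"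
    using oc_unfold[OF oc] by blast
  have bp: "bij_betw \<pi> {..<d} {..<d}" using o(1) unfolding beta_order_def by simp
  have s01: "0 \<le> sig d \<pi> j t i \<and> sig d \<pi> j t i \<le> 1" for i using sig_01[OF bp o(3,4)] by simp
  have mp: "\<And>k. k+1<d \<Longrightarrow> p (\<pi> (k+1)) / g (\<pi> (k+1)) \<le> p (\<pi> k) / g (\<pi> k)"
    using o(1) unfolding beta_order_def by blast
  have gp': "\<And>i. i<d \<Longrightarrow> 0 < g i" using gp by blast
  have s01': "\<And>i. i<d \<Longrightarrow> 0 \<le> sig d \<pi> j t i \<and> sig d \<pi> j t i \<le> 1" using s01 by blast
  have gr1: "\<And>a a'. a < a' \<Longrightarrow> a' < d \<Longrightarrow> 0 < sig d \<pi> j t (\<pi> a') \<Longrightarrow> sig d \<pi> j t (\<pi> a) = 1"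
    using sig_greedy[OF bp] by blast
  have e1: "(\<Sum>i<d. s i * g i) = (\<Sum>i<d. sig d \<pi> j t i * g i)" using s(2) o(5) by simp
  have e2: "(\<Sum>i<d. s' i * g i) = (\<Sum>i<d. sig d \<pi> j t i * g i)" using s'(2) o(5) by simp
  have "\<forall>i<d. s i = sig d \<pi> j t i"
    using conjunct2[OF knap_core[OF bp mp gp' pnn s(1) s01' gr1 e1]] inj s(3) o(6) by simp
  moreover have "\<forall>i<d. s' i = sig d \<pi> j t i"
    using conjunct2[OF knap_core[OF bp mp gp' pnn s'(1) s01' gr1 e2]] inj s'(3) o(6) by simp
  ultimately show ?thesis by simp
qed



lemma noncross_zero:
  fixes D :: "nat \<Rightarrow> nat \<Rightarrow> real"
  shows "finite C \<Longrightarrow> finite R \<Longrightarrow> card C + card R = n \<Longrightarrow>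
    (\<forall>a\<in>C. (\<Sum>b\<in>R. D a b) = 0) \<Longrightarrow> (\<forall>b\<in>R. (\<Sum>a\<in>C. D a b) = 0) \<Longrightarrow>
    (\<forall>a\<in>C. \<forall>a'\<in>C. \<forall>b\<in>R. \<forall>b'\<in>R. D a b \<noteq> 0 \<and> D a' b' \<noteq> 0 \<and> a < a' \<longrightarrow> b \<le> b') \<Longrightarrow>
    \<forall>a\<in>C. \<forall>b\<in>R. D a b = 0"
proof (induction n arbitrary: C R rule: less_induct)
  case (less n C R)
  show ?case
  proof (cases "C = {} \<or> R = {}")
    case True then show ?thesis by auto
  next
    case False
    define a0 where "a0 = Min C"
    define b0 where "b0 = Min R"
    have a0C: "a0 \<in> C" and a0m: "\<And>a. a \<in> C \<Longrightarrow> a0 \<le> a" using False less.prems(1) by (auto simp: a0_def)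
    have b0R: "b0 \<in> R" and b0m: "\<And>b. b \<in> R \<Longrightarrow> b0 \<le> b" using False less.prems(2) by (auto simp: b0_def)
    show ?thesis
    proof (cases "\<forall>b\<in>R. b \<noteq> b0 \<longrightarrow> D a0 b = 0")
      case True
      have "(\<Sum>b\<in>R. D a0 b) = D a0 b0 + (\<Sum>b\<in>R-{b0}. D a0 b)"
        using b0R less.prems(2) by (simp add: sum.remove)
      also have "(\<Sum>b\<in>R-{b0}. D a0 b) = 0" using True by (intro sum.neutral) auto
      finally have "D a0 b0 = 0" using less.prems(4) a0C by simp
      then have col0: "\<forall>b\<in>R. D a0 b = 0" using True by auto
      have IH: "\<forall>a\<in>C-{a0}. \<forall>b\<in>R. D a b = 0"
      proof (rule less.IH[of "card (C-{a0}) + card R" "C-{a0}" R])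
        show "card (C - {a0}) + card R < n" using less.prems(1,3) a0C
          by (metis add_less_mono1 card_Diff1_less)
        show "\<forall>b\<in>R. (\<Sum>a\<in>C - {a0}. D a b) = 0"
        proof
          fix b assume b: "b \<in> R"
          have "(\<Sum>a\<in>C. D a b) = D a0 b + (\<Sum>a\<in>C-{a0}. D a b)"
            using a0C less.prems(1) by (simp add: sum.remove)
          then show "(\<Sum>a\<in>C - {a0}. D a b) = 0" using less.prems(5) b col0 by simp
        qed
      qed (use less.prems in auto)
      show ?thesis using IH col0 by auto
    next
      case False
      then obtain b1 where b1: "b1 \<in> R" "b1 \<noteq> b0" "D a0 b1 \<noteq> 0" by auto
      have T2: "\<forall>a\<in>C. a \<noteq> a0 \<longrightarrow> D a b0 = 0"
      proof (intro ballI impI, rule ccontr)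
        fix a assume a: "a \<in> C" "a \<noteq> a0" "D a b0 \<noteq> 0"
        have "a0 < a" using a a0m[of a] by simp
        then have "b1 \<le> b0" using less.prems(6) a0C a b1 b0R by blast
        then show False using b0m[OF b1(1)] b1(2) by simp
      qed
      have "(\<Sum>a\<in>C. D a b0) = D a0 b0 + (\<Sum>a\<in>C-{a0}. D a b0)"
        using a0C less.prems(1) by (simp add: sum.remove)
      also have "(\<Sum>a\<in>C-{a0}. D a b0) = 0" using T2 by (intro sum.neutral) auto
      finally have "D a0 b0 = 0" using less.prems(5) b0R by simp
      then have row0: "\<forall>a\<in>C. D a b0 = 0" using T2 by auto
      have IH: "\<forall>a\<in>C. \<forall>b\<in>R-{b0}. D a b = 0"
      proof (rule less.IH[of "card C + card (R-{b0})" C "R-{b0}"])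
        show "card C + card (R-{b0}) < n" using less.prems(2,3) b0R
          by (metis add_less_mono card_Diff1_less le_refl nat_add_left_cancel_less)
        show "\<forall>a\<in>C. (\<Sum>b\<in>R - {b0}. D a b) = 0"
        proof
          fix a assume a: "a \<in> C"
          have "(\<Sum>b\<in>R. D a b) = D a b0 + (\<Sum>b\<in>R-{b0}. D a b)"
            using b0R less.prems(2) by (simp add: sum.remove)
          then show "(\<Sum>b\<in>R - {b0}. D a b) = 0" using less.prems(4) a row0 by simp
        qed
      qed (use less.prems in auto)
      show ?thesis using IH row0 by auto
    qed
  qed
qed

lemma plain_extremal:
  assumes gp: "\<And>i. 0 < g i" and TP: "T \<in> TP d g"
    and bl: "bij_betw lam {..<d} {..<d}" and bm: "bij_betw \<mu> {..<d} {..<d}"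
    and pl: "plain_drawing d T lam \<mu>"
  shows "extremal_TP d g T"
  unfolding extremal_TP_def
proof (intro conjI TP notI)
  assume "\<exists>A\<in>TP d g. \<exists>B\<in>TP d g. A \<noteq> B \<and> (\<exists>t::real. 0 < t \<and> t < 1 \<and> T = (\<lambda>i j. t * A i j + (1 - t) * B i j))"
  then obtain A B t where AB: "A \<in> TP d g" "B \<in> TP d g" "A \<noteq> B" "0 < t" "t < 1"
    "T = (\<lambda>i j. t * A i j + (1 - t) * B i j)" by blast
  define D where "D a b = (A (\<mu> b) (lam a) - B (\<mu> b) (lam a)) * g (lam a)" for a b
  have Ann: "\<And>i j. i<d \<Longrightarrow> j<d \<Longrightarrow> 0 \<le> A i j" and Bnn: "\<And>i j. i<d \<Longrightarrow> j<d \<Longrightarrow> 0 \<le> B i j"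
    using AB(1,2) unfolding TP_def by auto
  have supp: "T (\<mu> b) (lam a) > 0" if "a<d" "b<d" "D a b \<noteq> 0" for a b
  proof -
    have l: "\<mu> b < d" "lam a < d" using bij_lt bl bm that by auto
    have "A (\<mu> b) (lam a) \<noteq> B (\<mu> b) (lam a)" using that(3) D_def by auto
    then have "A (\<mu> b) (lam a) > 0 \<or> B (\<mu> b) (lam a) > 0"
      using Ann[OF l] Bnn[OF l] by linarith
    moreover have "T (\<mu> b) (lam a) = t * A (\<mu> b) (lam a) + (1 - t) * B (\<mu> b) (lam a)"
      using AB(6) by simp
    moreover have "0 \<le> t * A (\<mu> b) (lam a)" "0 \<le> (1-t) * B (\<mu> b) (lam a)"
      using AB(4,5) Ann[OF l] Bnn[OF l] by simp_all
    moreover have "A (\<mu> b) (lam a) > 0 \<Longrightarrow> 0 < t * A (\<mu> b) (lam a)" using AB(4) by simp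
    moreover have "B (\<mu> b) (lam a) > 0 \<Longrightarrow> 0 < (1-t) * B (\<mu> b) (lam a)" using AB(5) by simp
    ultimately show ?thesis by linarith
  qed
  have colsum: "(\<Sum>b\<in>{..<d}. D a b) = 0" if "a<d" for a
  proof -
    have l: "lam a < d" using bij_lt bl that by auto
    have "(\<Sum>b<d. D a b) = (\<Sum>b<d. A (\<mu> b) (lam a)) * g (lam a) - (\<Sum>b<d. B (\<mu> b) (lam a)) * g (lam a)"
      by (simp add: D_def sum_distrib_right sum_subtractf left_diff_distrib)
    also have "\<dots> = (\<Sum>i<d. A i (lam a)) * g (lam a) - (\<Sum>i<d. B i (lam a)) * g (lam a)"
      using reidx[OF bm, of "\<lambda>i. A i (lam a)"] reidx[OF bm, of "\<lambda>i. B i (lam a)"] by simp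
    also have "\<dots> = 0" using AB(1,2) l unfolding TP_def by auto
    finally show ?thesis by simp
  qed
  have rowsum: "(\<Sum>a\<in>{..<d}. D a b) = 0" if "b<d" for b
  proof -
    have l: "\<mu> b < d" using bij_lt bm that by auto
    have "(\<Sum>a<d. D a b) = (\<Sum>a<d. A (\<mu> b) (lam a) * g (lam a)) - (\<Sum>a<d. B (\<mu> b) (lam a) * g (lam a))"
      by (simp add: D_def sum_subtractf left_diff_distrib)
    also have "\<dots> = (\<Sum>j<d. A (\<mu> b) j * g j) - (\<Sum>j<d. B (\<mu> b) j * g j)"
      using reidx[OF bl, of "\<lambda>j. A (\<mu> b) j * g j"] reidx[OF bl, of "\<lambda>j. B (\<mu> b) j * g j"] by simp
    also have "\<dots> = 0" using AB(1,2) l unfolding TP_def by auto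
    finally show ?thesis by simp
  qed
  have nc: "\<forall>a\<in>{..<d}. \<forall>a'\<in>{..<d}. \<forall>b\<in>{..<d}. \<forall>b'\<in>{..<d}. D a b \<noteq> 0 \<and> D a' b' \<noteq> 0 \<and> a < a' \<longrightarrow> b \<le> b'"
  proof (intro ballI impI)
    fix a a' b b' assume h: "a \<in> {..<d}" "a' \<in> {..<d}" "b \<in> {..<d}" "b' \<in> {..<d}" "D a b \<noteq> 0 \<and> D a' b' \<noteq> 0 \<and> a < a'"
    show "b \<le> b'"
    proof (rule ccontr)
      assume "\<not> b \<le> b'"
      then have "b' < b" by simp
      moreover have "a < d" "a' < d" "b < d" "b' < d" "a < a'" using h by auto
      moreover have "T (\<mu> b) (lam a) > 0" "T (\<mu> b') (lam a') > 0" using supp h by auto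
      ultimately show False using pl unfolding plain_drawing_def by blast
    qed
  qed
  have Dz: "\<forall>a\<in>{..<d}. \<forall>b\<in>{..<d}. D a b = 0"
    by (rule noncross_zero[of "{..<d}" "{..<d}" "d + d" D]) (use colsum rowsum nc in auto)
  have "A = B"
  proof (intro ext)
    fix i j
    show "A i j = B i j"
    proof (cases "i < d \<and> j < d")
      case True
      obtain a where a: "a<d" "lam a = j" using bij_inv2[OF bl] True by blast
      obtain b where b: "b<d" "\<mu> b = i" using bij_inv2[OF bm] True by blast
      have "D a b = 0" using Dz a b by auto
      then show ?thesis using gp[of j] a b by (simp add: D_def)
    next
      case False then show ?thesis using AB(1,2) unfolding TP_def by auto
    qed
  qed
  then show False using AB(3) by simp
qed

lemma beta_exists: "\<exists>\<pi>. beta_order d g p \<pi>"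
proof -
  define xs where "xs = sort_key (\<lambda>i. - (p i / g i)) [0..<d]"
  have len: "length xs = d" by (simp add: xs_def)
  have st: "set xs = {..<d}" by (simp add: xs_def atLeast0LessThan)
  have ds: "distinct xs" by (simp add: xs_def)
  have b: "bij_betw ((!) xs) {..<d} {..<d}"
    by (rule bij_betw_nth[OF ds]) (simp_all add: len st)
  have srt: "sorted (map (\<lambda>i. - (p i / g i)) xs)" unfolding xs_def by (rule sorted_sort_key)
  have "p (xs ! (k+1)) / g (xs ! (k+1)) \<le> p (xs ! k) / g (xs ! k)" if "k+1 < d" for k
  proof -
    have "map (\<lambda>i. - (p i / g i)) xs ! k \<le> map (\<lambda>i. - (p i / g i)) xs ! (k+1)"
      using sorted_nth_mono[OF srt, of k "k+1"] that len by simp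
    then show ?thesis using that len by simp
  qed
  then show ?thesis using b unfolding beta_order_def by blast
qed



lemma construct:
  assumes gp: "\<And>i. 0 < g i" and gs: "(\<Sum>i<d. g i) = 1"
    and pst: "is_state d p" and rst: "is_state d r"
    and bol: "beta_order d g p lam" and bom: "beta_order d g r \<mu>"
    and tight: "\<And>k. 1 \<le> k \<Longrightarrow> k < d \<Longrightarrow> on_curve d g p (curve_vertex g r \<mu> k)"
    and Tdef: "T = (\<lambda>i j. if i<d \<and> j<d then
       ov (Xs g \<mu> (inv_into {..<d} \<mu> i)) (Xs g \<mu> (Suc (inv_into {..<d} \<mu> i)))
          (Xs g lam (inv_into {..<d} lam j)) (Xs g lam (Suc (inv_into {..<d} lam j))) / g j else 0)"
  shows "T \<in> TP d g \<and> maps_to d T p r \<and> plain_drawing d T lam \<mu>"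
proof -
  have bl: "bij_betw lam {..<d} {..<d}" using bol unfolding beta_order_def by simp
  have bm: "bij_betw \<mu> {..<d} {..<d}" using bom unfolding beta_order_def by simp
  define X where "X = Xs g lam"
  define Y where "Y = Xs g \<mu>"
  have Xm: "\<And>a b. a \<le> b \<Longrightarrow> X a \<le> X b" unfolding X_def by (rule Xs_mono[where g=g, OF gp])
  have Ym: "\<And>a b. a \<le> b \<Longrightarrow> Y a \<le> Y b" unfolding Y_def by (rule Xs_mono[where g=g, OF gp])
  have X0: "X 0 = 0" and Y0: "Y 0 = 0" by (simp_all add: X_def Y_def Xs_0)
  have Xd: "X d = 1" and Yd: "Y d = 1" using Xs_d[OF bl gs] Xs_d[OF bm gs] by (simp_all add: X_def Y_def)
  have XS: "X (Suc a) = X a + g (lam a)" for a by (simp add: X_def Xs_Suc)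
  have YS: "Y (Suc a) = Y a + g (\<mu> a)" for a by (simp add: Y_def Xs_Suc)
  have Xn: "0 \<le> X a" for a using Xm[of 0 a] X0 by simp
  have Yn: "0 \<le> Y a" for a using Ym[of 0 a] Y0 by simp
  have X1: "a \<le> d \<Longrightarrow> X a \<le> 1" for a using Xm[of a d] Xd by simp
  have Y1: "a \<le> d \<Longrightarrow> Y a \<le> 1" for a using Ym[of a d] Yd by simp
  have Tat: "T (\<mu> b) (lam a) = ov (Y b) (Y (Suc b)) (X a) (X (Suc a)) / g (lam a)" if "a<d" "b<d" for a b
    using that bij_lt[OF bl] bij_lt[OF bm] bij_inv1[OF bl] bij_inv1[OF bm]
    by (simp add: Tdef X_def Y_def)
  have pnn: "\<And>i. i<d \<Longrightarrow> 0 \<le> p i" and ps: "(\<Sum>i<d. p i) = 1" using pst unfolding is_state_def by auto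
  have rs: "(\<Sum>i<d. r i) = 1" using rst unfolding is_state_def by auto
  have col: "(\<Sum>i<d. T i j) = 1" if j: "j<d" for j
  proof -
    obtain a where a: "a<d" "lam a = j" using bij_inv2[OF bl j] by blast
    have "(\<Sum>i<d. T i j) = (\<Sum>b<d. T (\<mu> b) (lam a))" using reidx[OF bm, of "\<lambda>i. T i j"] a by simp
    also have "\<dots> = (\<Sum>b<d. ov (X a) (X (Suc a)) (Y b) (Y (Suc b)) / g (lam a))"
      using a(1) by (intro sum.cong) (simp_all add: Tat ov_sym)
    also have "\<dots> = (\<Sum>b<d. ov (X a) (X (Suc a)) (Y b) (Y (Suc b))) / g (lam a)"
      by (simp add: sum_divide_distrib)
    also have "\<dots> = ov (X a) (X (Suc a)) (Y 0) (Y d) / g (lam a)" using ov_sum[where X=Y, OF Ym] by simp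
    also have "\<dots> = 1" using Y0 Yd ov_full[of 0 "X a" "X (Suc a)" 1] Xn X1[of "Suc a"] a XS gp[of "lam a"]
      by simp
    finally show ?thesis .
  qed
  have rowg: "(\<Sum>j<d. T (\<mu> b) j * h j) = (\<Sum>a<d. ov (Y b) (Y (Suc b)) (X a) (X (Suc a)) * (h (lam a) / g (lam a)))"
    if b: "b<d" for b h
  proof -
    have "(\<Sum>j<d. T (\<mu> b) j * h j) = (\<Sum>a<d. T (\<mu> b) (lam a) * h (lam a))" by (rule reidx[OF bl])
    also have "\<dots> = (\<Sum>a<d. ov (Y b) (Y (Suc b)) (X a) (X (Suc a)) * (h (lam a) / g (lam a)))"
      using b by (intro sum.cong) (auto simp: Tat)
    finally show ?thesis .
  qed
  have row: "(\<Sum>j<d. T i j * g j) = g i" if i: "i<d" for i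
  proof -
    obtain b where b: "b<d" "\<mu> b = i" using bij_inv2[OF bm i] by blast
    have "(\<Sum>j<d. T i j * g j) = (\<Sum>a<d. ov (Y b) (Y (Suc b)) (X a) (X (Suc a)))"
      using rowg[OF b(1), of g] b gp by (simp add: less_imp_neq[symmetric])
    also have "\<dots> = ov (Y b) (Y (Suc b)) (X 0) (X d)" using ov_sum[where X=X, OF Xm] by simp
    also have "\<dots> = g i" using X0 Xd ov_full[of 0 "Y b" "Y (Suc b)" 1] Yn Y1[of "Suc b"] b YS less_imp_le[OF gp[of i]]
      by simp
    finally show ?thesis .
  qed
  have TP: "T \<in> TP d g"
    unfolding TP_def using col row gp ov_nonneg
    by (auto simp: Tdef intro!: divide_nonneg_pos)
  define R where "R k = (\<Sum>c<k. r (\<mu> c))" for k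
  define F where "F x = Fc d g p lam x" for x
  have FR: "F (Y k) = R k" if k: "k \<le> d" for k
  proof -
    consider "k = 0" | "k = d" | "1 \<le> k \<and> k < d" using k by linarith
    then show ?thesis
    proof cases
      case 1
      have "ov 0 0 (X a) (X (Suc a)) = 0" for a using Xn[of a] by (simp add: ov_def)
      then show ?thesis using 1 Y0 by (simp add: F_def Fc_def R_def X_def)
    next
      case 2
      have e: "ov 0 1 (X a) (X (Suc a)) = g (lam a)" if "a<d" for a
      proof -
        have "ov 0 1 (X a) (X (Suc a)) = ov (X a) (X (Suc a)) 0 1" by (rule ov_sym)
        also have "\<dots> = X (Suc a) - X a"
          by (rule ov_full) (use Xn[of a] X1[of "Suc a"] that XS[of a] less_imp_le[OF gp[of "lam a"]] in auto)
        finally show ?thesis using XS[of a] by simp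
      qed
      have "F (Y k) = (\<Sum>a<d. ov 0 1 (X a) (X (Suc a)) * (p (lam a) / g (lam a)))"
        using 2 Yd by (simp add: F_def Fc_def X_def)
      also have "\<dots> = (\<Sum>a<d. p (lam a))"
        using e gp by (intro sum.cong) (simp_all add: less_imp_neq[symmetric])
      also have "\<dots> = 1" using reidx[OF bl, of p] ps by simp
      also have "\<dots> = R k" using reidx[OF bm, of r] rs 2 by (simp add: R_def)
      finally show ?thesis .
    next
      case 3
      have "curve_vertex g r \<mu> k = (Y k, R k)" by (simp add: curve_vertex_def Y_def Xs_def R_def)
      then show ?thesis using curve_eq[OF gp gs pnn bol] tight[of k] 3 by (simp add: F_def)
    qed
  qed
  have maps: "maps_to d T p r"
    unfolding maps_to_def mat_apply_def
  proof (intro allI impI)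
    fix i assume i: "i<d"
    obtain b where b: "b<d" "\<mu> b = i" using bij_inv2[OF bm i] by blast
    have "(\<Sum>j<d. T i j * p j) = (\<Sum>a<d. ov (Y b) (Y (Suc b)) (X a) (X (Suc a)) * (p (lam a) / g (lam a)))"
      using rowg[OF b(1), of p] b by simp
    also have "\<dots> = (\<Sum>a<d. ov 0 (Y (Suc b)) (X a) (X (Suc a)) * (p (lam a) / g (lam a)))
        - (\<Sum>a<d. ov 0 (Y b) (X a) (X (Suc a)) * (p (lam a) / g (lam a)))"
      using ov_add1[of 0 "Y b" "Y (Suc b)"] Yn Ym[of b "Suc b"]
      by (simp add: sum_subtractf[symmetric] algebra_simps)
    also have "\<dots> = F (Y (Suc b)) - F (Y b)" by (simp add: F_def Fc_def X_def)
    also have "\<dots> = r i" using FR[of b] FR[of "Suc b"] b by (simp add: R_def)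
    finally show "(\<Sum>j<d. T i j * p j) = r i" .
  qed
  have plain: "plain_drawing d T lam \<mu>"
    unfolding plain_drawing_def
  proof
    assume "\<exists>a a' b b'. a < d \<and> a' < d \<and> b < d \<and> b' < d \<and> a < a' \<and> b' < b \<and>
      T (\<mu> b) (lam a) > 0 \<and> T (\<mu> b') (lam a') > 0"
    then obtain a a' b b' where h: "a < d" "a' < d" "b < d" "b' < d" "a < a'" "b' < b"
      "T (\<mu> b) (lam a) > 0" "T (\<mu> b') (lam a') > 0" by blast
    have "ov (Y b) (Y (Suc b)) (X a) (X (Suc a)) > 0"
      using h(7) Tat[OF h(1,3)] gp[of "lam a"] by (simp add: zero_less_divide_iff)
    then have 1: "Y b < X (Suc a)" using ov_pos by blast
    have "ov (Y b') (Y (Suc b')) (X a') (X (Suc a')) > 0"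
      using h(8) Tat[OF h(2,4)] gp[of "lam a'"] by (simp add: zero_less_divide_iff)
    then have 2: "X a' < Y (Suc b')" using ov_pos by blast
    have "X (Suc a) \<le> X a'" "Y (Suc b') \<le> Y b" using Xm Ym h(5,6) by auto
    then show False using 1 2 by linarith
  qed
  show ?thesis using TP maps plain by blast
qed



lemma feas:
  assumes M: "M \<in> TP d g" and mp: "maps_to d M p r" and bm: "bij_betw \<mu> {..<d} {..<d}" and k: "k \<le> d"
  shows "(\<forall>j<d. 0 \<le> (\<Sum>b<k. M (\<mu> b) j) \<and> (\<Sum>b<k. M (\<mu> b) j) \<le> 1)
     \<and> (\<Sum>j<d. (\<Sum>b<k. M (\<mu> b) j) * g j) = (\<Sum>b<k. g (\<mu> b))
     \<and> (\<Sum>j<d. (\<Sum>b<k. M (\<mu> b) j) * p j) = (\<Sum>b<k. r (\<mu> b))"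
proof (intro conjI allI impI)
  have nn: "\<And>i j. i<d \<Longrightarrow> j<d \<Longrightarrow> 0 \<le> M i j" and cs: "\<And>j. j<d \<Longrightarrow> (\<Sum>i<d. M i j) = 1"
    and rs: "\<And>i. i<d \<Longrightarrow> (\<Sum>j<d. M i j * g j) = g i" using M unfolding TP_def by auto
  have mu: "\<And>b. b < k \<Longrightarrow> \<mu> b < d" using bij_lt[OF bm] k by auto
  fix j assume j: "j<d"
  show "0 \<le> (\<Sum>b<k. M (\<mu> b) j)" using nn mu j by (intro sum_nonneg) auto
  have "(\<Sum>b<k. M (\<mu> b) j) \<le> (\<Sum>b<d. M (\<mu> b) j)"
    using nn bij_lt[OF bm] j k by (intro sum_mono2) auto
  also have "\<dots> = (\<Sum>i<d. M i j)" using reidx[OF bm, of "\<lambda>i. M i j"] by simp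
  also have "\<dots> = 1" using cs j by simp
  finally show "(\<Sum>b<k. M (\<mu> b) j) \<le> 1" .
next
  have rs: "\<And>i. i<d \<Longrightarrow> (\<Sum>j<d. M i j * g j) = g i" using M unfolding TP_def by auto
  have mu: "\<And>b. b < k \<Longrightarrow> \<mu> b < d" using bij_lt[OF bm] k by auto
  have "(\<Sum>j<d. (\<Sum>b<k. M (\<mu> b) j) * g j) = (\<Sum>b<k. \<Sum>j<d. M (\<mu> b) j * g j)"
    by (simp add: sum_distrib_right sum.swap[of _ "{..<d}"])
  also have "\<dots> = (\<Sum>b<k. g (\<mu> b))" using rs mu by (intro sum.cong) auto
  finally show "(\<Sum>j<d. (\<Sum>b<k. M (\<mu> b) j) * g j) = (\<Sum>b<k. g (\<mu> b))" .
next
  have rs: "\<And>i. i<d \<Longrightarrow> (\<Sum>j<d. M i j * p j) = r i" using mp unfolding maps_to_def mat_apply_def by auto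
  have mu: "\<And>b. b < k \<Longrightarrow> \<mu> b < d" using bij_lt[OF bm] k by auto
  have "(\<Sum>j<d. (\<Sum>b<k. M (\<mu> b) j) * p j) = (\<Sum>b<k. \<Sum>j<d. M (\<mu> b) j * p j)"
    by (simp add: sum_distrib_right sum.swap[of _ "{..<d}"])
  also have "\<dots> = (\<Sum>b<k. r (\<mu> b))" using rs mu by (intro sum.cong) auto
  finally show "(\<Sum>j<d. (\<Sum>b<k. M (\<mu> b) j) * p j) = (\<Sum>b<k. r (\<mu> b))" .
qed

lemma uniq:
  assumes gp: "\<And>i. 0 < g i" and pst: "is_state d p"
    and bom: "beta_order d g r \<mu>"
    and tight: "\<And>k. 1 \<le> k \<Longrightarrow> k < d \<Longrightarrow> on_curve d g p (curve_vertex g r \<mu> k)"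
    and inj: "inj_on (\<lambda>i. p i / g i) {..<d}"
    and T: "T \<in> TP d g" "maps_to d T p r" and T': "T' \<in> TP d g" "maps_to d T' p r"
  shows "T' = T"
proof -
  have bm: "bij_betw \<mu> {..<d} {..<d}" using bom unfolding beta_order_def by simp
  have pnn: "\<And>i. i<d \<Longrightarrow> 0 \<le> p i" using pst unfolding is_state_def by auto
  have S: "(\<Sum>b<k. T' (\<mu> b) j) = (\<Sum>b<k. T (\<mu> b) j)" if k: "k \<le> d" and j: "j < d" for k j
  proof -
    consider "k = 0" | "k = d" | "1 \<le> k \<and> k < d" using k by linarith
    then show ?thesis
    proof cases
      case 1 then show ?thesis by simp
    next
      case 2
      have "(\<Sum>b<k. T' (\<mu> b) j) = (\<Sum>i<d. T' i j)" using reidx[OF bm, of "\<lambda>i. T' i j"] 2 by simp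
      also have "\<dots> = 1" using T' j unfolding TP_def by auto
      also have "\<dots> = (\<Sum>i<d. T i j)" using T j unfolding TP_def by auto
      also have "\<dots> = (\<Sum>b<k. T (\<mu> b) j)" using reidx[OF bm, of "\<lambda>i. T i j"] 2 by simp
      finally show ?thesis .
    next
      case 3
      have cv: "curve_vertex g r \<mu> k = ((\<Sum>b<k. g (\<mu> b)), (\<Sum>b<k. r (\<mu> b)))"
        by (simp add: curve_vertex_def)
      have oc: "on_curve d g p ((\<Sum>b<k. g (\<mu> b)), (\<Sum>b<k. r (\<mu> b)))" using tight[of k] 3 cv by simp
      note f1 = feas[OF T' bm k] and f2 = feas[OF T bm k]
      have "\<forall>i<d. (\<Sum>b<k. T' (\<mu> b) i) = (\<Sum>b<k. T (\<mu> b) i)"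
        by (rule curve_unique[where g=g, OF gp pnn oc inj]) (use f1 f2 in auto)
      then show ?thesis using j by simp
    qed
  qed
  show ?thesis
  proof (intro ext)
    fix i j
    show "T' i j = T i j"
    proof (cases "i < d \<and> j < d")
      case True
      obtain b where b: "b<d" "\<mu> b = i" using bij_inv2[OF bm] True by blast
      have "T' i j = (\<Sum>c<Suc b. T' (\<mu> c) j) - (\<Sum>c<b. T' (\<mu> c) j)" using b by simp
      also have "\<dots> = (\<Sum>c<Suc b. T (\<mu> c) j) - (\<Sum>c<b. T (\<mu> c) j)"
        using S[of "Suc b" j] S[of b j] b True by simp
      also have "\<dots> = T i j" using b by simp
      finally show ?thesis .
    next
      case False then show ?thesis using T(1) T'(1) unfolding TP_def by auto
    qed
  qed
qed



theorem mainTheorem8: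
  fixes d :: nat and \<beta> :: real and E :: "nat \<Rightarrow> real" and p r :: "nat \<Rightarrow> real"
  assumes "2 \<le> d" and "0 < \<beta>" and "E 0 = 0" and "inj_on E {..<d}"
    and "is_state d p" and "is_state d r"
    and "tightly_thermomaj d (gibbs d \<beta> E) p r"
  shows "\<exists>T. extremal_TP d (gibbs d \<beta> E) T \<and> biplanar d (gibbs d \<beta> E) T \<and> maps_to d T p r \<and>
           (\<exists>lam \<mu>. beta_order d (gibbs d \<beta> E) p lam \<and> beta_order d (gibbs d \<beta> E) r \<mu> \<and>
                  plain_drawing d T lam \<mu>) \<and>
           (inj_on (\<lambda>i. p i / gibbs d \<beta> E i) {..<d} \<longrightarrow>
              (\<forall>T'\<in>TP d (gibbs d \<beta> E). maps_to d T' p r \<longrightarrow> T' = T))"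
proof -
  let ?g = "gibbs d \<beta> E"
  have Zpos: "0 < (\<Sum>j<d. exp (- \<beta> * E j))"
    using assms(1) by (intro sum_pos) (auto simp: lessThan_empty_iff)
  have gp: "\<And>i. 0 < ?g i" unfolding gibbs_def using Zpos by simp
  have gs: "(\<Sum>i<d. ?g i) = 1" unfolding gibbs_def using Zpos
    by (simp add: sum_divide_distrib[symmetric])
  obtain lam where bol: "beta_order d ?g p lam" using beta_exists by blast
  obtain \<mu> where bom: "beta_order d ?g r \<mu>" using beta_exists by blast
  have tight: "\<And>k. 1 \<le> k \<Longrightarrow> k < d \<Longrightarrow> on_curve d ?g p (curve_vertex ?g r \<mu> k)"
    using assms(7) bom unfolding tightly_thermomaj_def by blast
  define T where "T = (\<lambda>i j. if i<d \<and> j<d then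
       ov (Xs ?g \<mu> (inv_into {..<d} \<mu> i)) (Xs ?g \<mu> (Suc (inv_into {..<d} \<mu> i)))
          (Xs ?g lam (inv_into {..<d} lam j)) (Xs ?g lam (Suc (inv_into {..<d} lam j))) / ?g j else 0)"
  have c: "T \<in> TP d ?g \<and> maps_to d T p r \<and> plain_drawing d T lam \<mu>"
    by (rule construct[where g="?g", OF gp gs assms(5,6) bol bom tight T_def])
  have bl: "bij_betw lam {..<d} {..<d}" using bol unfolding beta_order_def by simp
  have bm: "bij_betw \<mu> {..<d} {..<d}" using bom unfolding beta_order_def by simp
  have ex: "extremal_TP d ?g T"
    using plain_extremal[where g="?g", OF gp _ bl bm] c by blast
  have bp: "biplanar d ?g T" unfolding biplanar_def using ex bl bm c by blast
  have un: "inj_on (\<lambda>i. p i / ?g i) {..<d} \<longrightarrow> (\<forall>T'\<in>TP d ?g. maps_to d T' p r \<longrightarrow> T' = T)"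
  proof (intro impI ballI)
    fix T' assume inj: "inj_on (\<lambda>i. p i / ?g i) {..<d}" and T': "T' \<in> TP d ?g" "maps_to d T' p r"
    show "T' = T"
      by (rule uniq[where g="?g", OF gp assms(5) bom tight inj _ _ T']) (use c in auto)
  qed
  show ?thesis using ex bp c bol bom un by blast
qed


end
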